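(* For every set $Q\subseteq\{0,1\}^n$ of at most $q=2^{0.01\sqrt n}$ points, $\Pr_{\mathbf A}[\mathsf{Bad}_J]=o_n(1)$.
   Context: Let $n$ be even and $a=n/2$. $\mathbf A\subseteq[n]$ is a uniformly random set of size $a$ and $\mathbf C=[n]\setminus\mathbf A$; $x_B$ denotes the restriction of $x$ to $B$ and $|z|$ the Hamming weight. The event $\mathsf{Bad}_J$ holds iff there exist $x,y\in Q$ with $x_{\mathbf C}=y_{\mathbf C}$, $|x_{\mathbf A}|>a/2+0.05\sqrt a$ and $|y_{\mathbf A}|<a/2-0.05\sqrt a$. *)

theory Defs
  imports Complex_Main
begin

text \<open>Points of the cube {0,1}^n are encoded as subsets x of {0..<n} (the support).
  Then x restricted to B is determined by x \<inter> B and its Hamming weight is card (x \<inter> B).\<close>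

definition Bad :: "nat \<Rightarrow> nat set set \<Rightarrow> nat set \<Rightarrow> bool" where
  "Bad n Q A \<longleftrightarrow>
     (let a = n div 2; C = {0..<n} - A in
      \<exists>x\<in>Q. \<exists>y\<in>Q. x \<inter> C = y \<inter> C
        \<and> real (card (x \<inter> A)) > real a / 2 + 0.05 * sqrt (real a)
        \<and> real (card (y \<inter> A)) < real a / 2 - 0.05 * sqrt (real a))"

definition prob_Bad :: "nat \<Rightarrow> nat set set \<Rightarrow> real" where
  "prob_Bad n Q =
     real (card {A. A \<subseteq> {0..<n} \<and> card A = n div 2 \<and> Bad n Q A})
     / real (n choose (n div 2))"

end

theory Submission
  imports Defs "HOL-Real_Asymp.Real_Asymp"
begin

lemma binom_step:
  assumes "k \<ge> 1" "2*k \<le> n"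
  shows "2 * (n - 1 choose (k - 1)) \<le> n choose k"
proof -
  have e: "k * (n choose k) = n * (n - 1 choose (k - 1))"
    using times_binomial_minus1_eq[of k n] assms by simp
  have "k * (2 * (n - 1 choose (k - 1))) \<le> k * (n choose k)"
    unfolding e using assms by (simp add: mult.assoc[symmetric])
  then show ?thesis using assms by simp
qed

lemma binom_pow:
  "d \<le> k \<Longrightarrow> 2*k \<le> n \<Longrightarrow> 2^d * (n - d choose (k - d)) \<le> n choose k"
proof (induction d arbitrary: n k)
  case 0 then show ?case by simp
next
  case (Suc d)
  have IH: "2^d * (n - 1 - d choose (k - 1 - d)) \<le> n - 1 choose (k - 1)"
    using Suc by (intro Suc.IH) auto
  have "2^Suc d * (n - Suc d choose (k - Suc d)) = 2 * (2^d * (n - 1 - d choose (k - 1 - d)))"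
    by (simp add: diff_diff_add)
  also have "\<dots> \<le> 2 * (n - 1 choose (k - 1))" using IH by simp
  also have "\<dots> \<le> n choose k" using Suc by (intro binom_step) auto
  finally show ?case .
qed

lemma count_contain:
  assumes "D \<subseteq> {0..<n}" "2*k \<le> n"
  shows "2 ^ card D * card {A. A \<subseteq> {0..<n} \<and> card A = k \<and> D \<subseteq> A} \<le> n choose k"
proof (cases "card D \<le> k")
  case False
  have e: "{A. A \<subseteq> {0..<n} \<and> card A = k \<and> D \<subseteq> A} = {}"
  proof safe
    fix A assume "A \<subseteq> {0..<n}" "k = card A" "D \<subseteq> A"
    then have "card D \<le> card A" by (meson card_mono finite_atLeastLessThan finite_subset)
    then show "A \<in> {}" using False \<open>k = card A\<close> by simp
  qed
  show ?thesis unfolding e by simp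
next
  case True
  have fD: "finite D" using assms(1) finite_subset by blast
  have inj: "inj_on (\<lambda>A. A - D) {A. A \<subseteq> {0..<n} \<and> card A = k \<and> D \<subseteq> A}"
    by (rule inj_onI) blast
  have img: "(\<lambda>A. A - D) ` {A. A \<subseteq> {0..<n} \<and> card A = k \<and> D \<subseteq> A}
      \<subseteq> {B. B \<subseteq> {0..<n} - D \<and> card B = k - card D}"
    using fD by (auto simp: card_Diff_subset)
  have "card {A. A \<subseteq> {0..<n} \<and> card A = k \<and> D \<subseteq> A}
      \<le> card {B. B \<subseteq> {0..<n} - D \<and> card B = k - card D}"
    by (rule card_inj_on_le[OF inj img]) simp
  also have "\<dots> = (n - card D) choose (k - card D)"
    using assms(1) fD by (simp add: n_subsets card_Diff_subset)
  finally have "2 ^ card D * card {A. A \<subseteq> {0..<n} \<and> card A = k \<and> D \<subseteq> A}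
      \<le> 2 ^ card D * ((n - card D) choose (k - card D))" by simp
  also have "\<dots> \<le> n choose k" using binom_pow[OF True assms(2)] .
  finally show ?thesis .
qed

theorem mainTheorem14:
  shows "\<forall>\<epsilon>>0. \<exists>N. \<forall>n Q. even n \<longrightarrow> n \<ge> N \<longrightarrow> Q \<subseteq> Pow {0..<n}
           \<longrightarrow> real (card Q) \<le> 2 powr (0.01 * sqrt (real n))
           \<longrightarrow> prob_Bad n Q \<le> \<epsilon>"
proof (intro allI impI)
  fix \<epsilon> :: real assume "\<epsilon> > 0"
  have lim: "((\<lambda>n::nat. 2 powr (-0.05 * sqrt (real n))) \<longlongrightarrow> 0) sequentially"
    by real_asymp
  from order_tendstoD(2)[OF lim \<open>\<epsilon> > 0\<close>] obtain N where
    N: "\<And>n. n \<ge> N \<Longrightarrow> 2 powr (-0.05 * sqrt (real n)) < \<epsilon>"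
    unfolding eventually_sequentially by blast
  show "\<exists>N. \<forall>n Q. even n \<longrightarrow> n \<ge> N \<longrightarrow> Q \<subseteq> Pow {0..<n}
           \<longrightarrow> real (card Q) \<le> 2 powr (0.01 * sqrt (real n))
           \<longrightarrow> prob_Bad n Q \<le> \<epsilon>"
  proof (intro exI allI impI)
    fix n :: nat and Q :: "nat set set"
    assume ev: "even n" and nN: "n \<ge> N" and QP: "Q \<subseteq> Pow {0..<n}"
      and cQ: "real (card Q) \<le> 2 powr (0.01 * sqrt (real n))"
    define a where "a = n div 2"
    have ra: "real a = real n / 2" using ev unfolding a_def by auto
    have a2: "2 * a \<le> n" unfolding a_def by simp
    define P where "P = {p \<in> Q \<times> Q. real (card (fst p - snd p)) > 0.1 * sqrt (real a)}"
    define S where "S = (\<lambda>p::nat set \<times> nat set. {A. A \<subseteq> {0..<n} \<and> card A = a \<and> fst p - snd p \<subseteq> A})"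
    have fQ: "finite Q" using QP by (meson finite_Pow_iff finite_atLeastLessThan finite_subset)
    have fP: "finite P" unfolding P_def using fQ by simp
    have sub: "{A. A \<subseteq> {0..<n} \<and> card A = n div 2 \<and> Bad n Q A} \<subseteq> (\<Union>p\<in>P. S p)"
    proof
      fix A assume "A \<in> {A. A \<subseteq> {0..<n} \<and> card A = n div 2 \<and> Bad n Q A}"
      then have A: "A \<subseteq> {0..<n}" "card A = a" "Bad n Q A" unfolding a_def by auto
      then obtain x y where xy: "x \<in> Q" "y \<in> Q" "x \<inter> ({0..<n} - A) = y \<inter> ({0..<n} - A)"
        "real (card (x \<inter> A)) > real a / 2 + 0.05 * sqrt (real a)"
        "real (card (y \<inter> A)) < real a / 2 - 0.05 * sqrt (real a)"
        unfolding Bad_def Let_def a_def by blast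
      have xs: "x \<subseteq> {0..<n}" using xy(1) QP by blast
      have D: "x - y \<subseteq> A"
      proof
        fix z assume z: "z \<in> x - y"
        show "z \<in> A"
        proof (rule ccontr)
          assume "z \<notin> A"
          then have "z \<in> x \<inter> ({0..<n} - A)" using z xs by blast
          then show False using xy(3) z by blast
        qed
      qed
      have fA: "finite A" using A(1) finite_subset by blast
      have "x \<inter> A \<subseteq> (y \<inter> A) \<union> (x - y)" by blast
      then have "card (x \<inter> A) \<le> card ((y \<inter> A) \<union> (x - y))"
        using fA D by (intro card_mono) (auto intro: finite_subset)
      also have "\<dots> \<le> card (y \<inter> A) + card (x - y)" by (rule card_Un_le)
      finally have "real (card (x \<inter> A)) \<le> real (card (y \<inter> A)) + real (card (x - y))" by linarith
      moreover have "0.1 * sqrt (real a) = 0.05 * sqrt (real a) + 0.05 * sqrt (real a)" by simp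
      ultimately have "real (card (x - y)) > 0.1 * sqrt (real a)" using xy(4,5) by linarith
      then have "(x, y) \<in> P" unfolding P_def using xy by simp
      moreover have "A \<in> S (x, y)" unfolding S_def using A D by simp
      ultimately show "A \<in> (\<Union>p\<in>P. S p)" by blast
    qed
    have pos: "real (n choose a) > 0" using a2 by simp
    have each: "real (card (S p)) \<le> real (n choose a) * 2 powr (-0.1 * sqrt (real a))" if "p \<in> P" for p
    proof -
      obtain x y where p: "p = (x, y)" by fastforce
      have xQ: "x \<in> Q" and d: "real (card (x - y)) > 0.1 * sqrt (real a)"
        using that unfolding P_def p by auto
      have "x - y \<subseteq> {0..<n}" using xQ QP by blast
      from count_contain[OF this a2]
      have c0: "2 ^ card (x - y) * card (S p) \<le> n choose a"
        unfolding S_def p by simp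
      then have "real (2 ^ card (x - y) * card (S p)) \<le> real (n choose a)"
        by (simp only: of_nat_le_iff)
      then have c: "2 ^ card (x - y) * real (card (S p)) \<le> real (n choose a)"
        by simp
      have "2 powr (0.1 * sqrt (real a)) \<le> 2 powr real (card (x - y))"
        using d by (intro powr_mono) auto
      also have "\<dots> = 2 ^ card (x - y)" by (simp add: powr_realpow)
      finally have le: "2 powr (0.1 * sqrt (real a)) * real (card (S p)) \<le> real (n choose a)"
        using c by (meson mult_right_mono of_nat_0_le_iff order_trans)
      have "real (card (S p)) = 2 powr (0.1 * sqrt (real a)) * real (card (S p)) * 2 powr (-0.1 * sqrt (real a))"
        by (simp add: powr_minus field_simps)
      also have "\<dots> \<le> real (n choose a) * 2 powr (-0.1 * sqrt (real a))"
        using le by (intro mult_right_mono) auto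
      finally show ?thesis .
    qed
    have "card {A. A \<subseteq> {0..<n} \<and> card A = n div 2 \<and> Bad n Q A} \<le> card (\<Union>p\<in>P. S p)"
    proof (rule card_mono[OF _ sub])
      have "(\<Union>p\<in>P. S p) \<subseteq> Pow {0..<n}" unfolding S_def by blast
      then show "finite (\<Union>p\<in>P. S p)" by (rule finite_subset) simp
    qed
    also have "\<dots> \<le> (\<Sum>p\<in>P. card (S p))" by (rule card_UN_le[OF fP])
    finally have h: "card {A. A \<subseteq> {0..<n} \<and> card A = n div 2 \<and> Bad n Q A} \<le> (\<Sum>p\<in>P. card (S p))" .
    have "real (card {A. A \<subseteq> {0..<n} \<and> card A = n div 2 \<and> Bad n Q A}) \<le> real (\<Sum>p\<in>P. card (S p))"
      using h by (simp only: of_nat_le_iff)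
    also have "\<dots> = (\<Sum>p\<in>P. real (card (S p)))" by (simp only: of_nat_sum)
    also have "\<dots> \<le> (\<Sum>p\<in>P. real (n choose a) * 2 powr (-0.1 * sqrt (real a)))"
      by (intro sum_mono each)
    also have "\<dots> = real (card P) * (real (n choose a) * 2 powr (-0.1 * sqrt (real a)))" by simp
    also have "\<dots> \<le> real (card Q) ^ 2 * (real (n choose a) * 2 powr (-0.1 * sqrt (real a)))"
    proof -
      have "card P \<le> card (Q \<times> Q)" unfolding P_def using fQ by (intro card_mono) auto
      then have "real (card P) \<le> real (card Q) ^ 2" by (simp add: card_cartesian_product power2_eq_square flip: of_nat_mult)
      then show ?thesis by (intro mult_right_mono) auto
    qed
    finally have cnt: "real (card {A. A \<subseteq> {0..<n} \<and> card A = n div 2 \<and> Bad n Q A})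
        \<le> real (n choose a) * (real (card Q) ^ 2 * 2 powr (-0.1 * sqrt (real a)))" by (simp add: mult_ac)
    have "prob_Bad n Q \<le> real (card Q) ^ 2 * 2 powr (-0.1 * sqrt (real a))"
      unfolding prob_Bad_def a_def[symmetric] using cnt[unfolded a_def[symmetric]] pos by (simp add: divide_le_eq mult_ac)
    also have "\<dots> \<le> (2 powr (0.01 * sqrt (real n))) ^ 2 * 2 powr (-0.1 * sqrt (real a))"
      using cQ by (intro mult_right_mono power_mono) auto
    also have "\<dots> = 2 powr (0.02 * sqrt (real n) - 0.1 * sqrt (real a))"
      by (simp add: power2_eq_square powr_add[symmetric])
    also have "\<dots> \<le> 2 powr (-0.05 * sqrt (real n))"
    proof (intro powr_mono)
      have "(0.7 * sqrt (real n))^2 \<le> real a" using ra by (simp add: power_mult_distrib power_divide)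
      then have "0.7 * sqrt (real n) \<le> sqrt (real a)" by (rule real_le_rsqrt)
      then show "0.02 * sqrt (real n) - 0.1 * sqrt (real a) \<le> -0.05 * sqrt (real n)" by simp
    qed simp
    also have "\<dots> \<le> \<epsilon>" using N[OF nN] by simp
    finally show "prob_Bad n Q \<le> \<epsilon>" .
  qed
qed

end
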